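(* Let $d\ge 1$ and $p\in[0,1]$ with $0\le p<p_d=\frac{2d+1}{4d}$, and let $(S_n)$ be the $d$-dimensional elephant random walk with memory parameter $p$ described in the context. Then $$\lim_{n\to\infty}\frac{1}{n}S_n=0\quad\text{almost surely.}$$
   Context: Multi-dimensional elephant random walk (MERW). Fix a dimension $d\ge1$ and a memory parameter $p\in[0,1]$. Let $(e_1,\dots,e_d)$ be the standard basis of $\mathbb{R}^d$, $I_d$ the $d\times d$ identity matrix, and $J_d$ the $d\times d$ cyclic permutation matrix with entries $(J_d)_{i,i+1}=1$ for $1\le i\le d-1$, $(J_d)_{d,1}=1$, and all other entries $0$ (so $J_d^d=I_d$). Set $S_0=0$. The first step $X_1$ is uniformly distributed on the $2d$ vectors $\{\pm e_1,\dots,\pm e_d\}$. For $n\ge1$, given $\mathcal{F}_n=\sigma(X_1,\dots,X_n)$, the next step is $X_{n+1}=A_nX_{b_n}$, where $b_n$ is uniformly distributed on $\{1,\dots,n\}$, and $A_n$ is a random matrix, with $b_n$ and $A_n$ independent of each other and of $\mathcal{F}_n$, taking the value $I_d$ with probability $p$ and each of the $2d-1$ values $-I_d,\ \pm J_d,\ \pm J_d^2,\dots,\pm J_d^{d-1}$ with probability $\frac{1-p}{2d-1}$. The position is $S_n=X_1+\dots+X_n$. Define $a=\frac{2dp-1}{2d-1}$; note $p<p_d$ iff $a<1/2$. *)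

theory Defs
  imports "HOL-Probability.Probability"
begin

text \<open>Vectors of R^d are represented as functions nat => real (coordinates 0..d-1, zero
  outside), d x d matrices as functions nat => nat => real (entries (i,j) with i,j < d).\<close>

definition unit_vec :: "nat \<Rightarrow> nat \<Rightarrow> (nat \<Rightarrow> real)" where
  "unit_vec d i = (\<lambda>j. if j = i \<and> j < d then 1 else 0)"

definition id_mat :: "nat \<Rightarrow> (nat \<Rightarrow> nat \<Rightarrow> real)" where
  "id_mat d = (\<lambda>i j. if i = j \<and> i < d then 1 else 0)"

definition cyc_mat :: "nat \<Rightarrow> (nat \<Rightarrow> nat \<Rightarrow> real)" where
  "cyc_mat d = (\<lambda>i j. if i < d \<and> j < d \<and> ((i + 1 < d \<and> j = i + 1) \<or> (i + 1 = d \<and> j = 0))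
                      then 1 else 0)"

definition mat_mult :: "nat \<Rightarrow> (nat \<Rightarrow> nat \<Rightarrow> real) \<Rightarrow> (nat \<Rightarrow> nat \<Rightarrow> real) \<Rightarrow> (nat \<Rightarrow> nat \<Rightarrow> real)" where
  "mat_mult d A B = (\<lambda>i j. \<Sum>k<d. A i k * B k j)"

definition mat_pow :: "nat \<Rightarrow> (nat \<Rightarrow> nat \<Rightarrow> real) \<Rightarrow> nat \<Rightarrow> (nat \<Rightarrow> nat \<Rightarrow> real)" where
  "mat_pow d A k = ((mat_mult d A) ^^ k) (id_mat d)"

definition mat_vec :: "nat \<Rightarrow> (nat \<Rightarrow> nat \<Rightarrow> real) \<Rightarrow> (nat \<Rightarrow> real) \<Rightarrow> (nat \<Rightarrow> real)" where
  "mat_vec d A v = (\<lambda>i. if i < d then (\<Sum>j<d. A i j * v j) else 0)"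

definition step_pmf :: "nat \<Rightarrow> (nat \<Rightarrow> real) pmf" where
  "step_pmf d = pmf_of_set ({unit_vec d i | i. i < d} \<union> {- unit_vec d i | i. i < d})"

definition mat_set :: "nat \<Rightarrow> (nat \<Rightarrow> nat \<Rightarrow> real) set" where
  "mat_set d = {mat_pow d (cyc_mat d) k | k. k < d} \<union> {- mat_pow d (cyc_mat d) k | k. k < d}"

definition mat_pmf :: "nat \<Rightarrow> real \<Rightarrow> (nat \<Rightarrow> nat \<Rightarrow> real) pmf" where
  "mat_pmf d p = bind_pmf (bernoulli_pmf p)
     (\<lambda>c. if c then return_pmf (id_mat d) else pmf_of_set (mat_set d - {id_mat d}))"

text \<open>Innovation at time n: (first-step candidate, b_n uniform on {1..n}, A_n), all independent.
  Only the first component of innovation 0 and the last two components of innovations n >= 1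
  are used.\<close>
definition innov :: "nat \<Rightarrow> real \<Rightarrow> nat \<Rightarrow> ((nat \<Rightarrow> real) \<times> nat \<times> (nat \<Rightarrow> nat \<Rightarrow> real)) pmf" where
  "innov d p n = pair_pmf (step_pmf d) (pair_pmf (pmf_of_set {1..max 1 n}) (mat_pmf d p))"

definition merw_space :: "nat \<Rightarrow> real \<Rightarrow> (nat \<Rightarrow> ((nat \<Rightarrow> real) \<times> nat \<times> (nat \<Rightarrow> nat \<Rightarrow> real))) measure" where
  "merw_space d p = PiM UNIV (\<lambda>n. measure_pmf (innov d p n))"

text \<open>walk_steps d w n = [X_1, ..., X_n];  X_1 = fst (w 0), X_(n+1) = A_n X_(b_n) for n >= 1.\<close>
fun walk_steps :: "nat \<Rightarrow> (nat \<Rightarrow> ((nat \<Rightarrow> real) \<times> nat \<times> (nat \<Rightarrow> nat \<Rightarrow> real))) \<Rightarrow> nat \<Rightarrow> (nat \<Rightarrow> real) list" where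
  "walk_steps d w 0 = []"
| "walk_steps d w (Suc 0) = [fst (w 0)]"
| "walk_steps d w (Suc (Suc n)) =
     (let xs = walk_steps d w (Suc n); b = fst (snd (w (Suc n))); A = snd (snd (w (Suc n)))
      in xs @ [mat_vec d A (xs ! (b - 1))])"

definition merw_X :: "nat \<Rightarrow> (nat \<Rightarrow> ((nat \<Rightarrow> real) \<times> nat \<times> (nat \<Rightarrow> nat \<Rightarrow> real))) \<Rightarrow> nat \<Rightarrow> (nat \<Rightarrow> real)" where
  "merw_X d w n = walk_steps d w n ! (n - 1)"

definition merw_S :: "nat \<Rightarrow> (nat \<Rightarrow> ((nat \<Rightarrow> real) \<times> nat \<times> (nat \<Rightarrow> nat \<Rightarrow> real))) \<Rightarrow> nat \<Rightarrow> (nat \<Rightarrow> real)" where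
  "merw_S d w n = (\<lambda>i. \<Sum>k\<in>{1..n}. merw_X d w k i)"

end

theory Submission
  imports Defs "HOL-Library.Discrete_Functions"
begin

lemma walk_len[simp]: "length (walk_steps d w n) = n"
  by (induction d w n rule: walk_steps.induct) (auto simp: Let_def)

lemma walk_local: "(\<And>k. k < n \<Longrightarrow> w k = w' k) \<Longrightarrow> walk_steps d w n = walk_steps d w' n"
  by (induction d w n rule: walk_steps.induct) (auto simp: Let_def)

lemma walk_prefix: "j < n \<Longrightarrow> walk_steps d w n ! j = merw_X d w (Suc j)"
proof (induction d w n rule: walk_steps.induct)
  case (3 d w n)
  show ?case
  proof (cases "j < Suc n")
    case True then show ?thesis using 3 by (simp add: Let_def nth_append)
  next
    case False then have "j = Suc n" using 3 by simp
    then show ?thesis by (simp add: merw_X_def Let_def nth_append)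
  qed
qed (auto simp: merw_X_def)

lemma walk_beyond: "n \<le> k \<Longrightarrow> walk_steps d w n ! k = [] ! (k - n)"
proof (induction d w n arbitrary: k rule: walk_steps.induct)
  case (2 d w) then show ?case by (cases k) auto
next
  case (3 d w n)
  have "k - Suc n = Suc (k - Suc (Suc n))" using 3 by simp
  then show ?case using 3 by (simp add: Let_def nth_append del: nth_Cons_Suc)
qed auto

lemma merw_X_SS: "merw_X d w (Suc (Suc n)) = mat_vec d (snd (snd (w (Suc n)))) (walk_steps d w (Suc n) ! (fst (snd (w (Suc n))) - 1))"
  by (simp add: merw_X_def Let_def nth_append)

lemma merw_S_Suc: "merw_S d w (Suc n) i = merw_S d w n i + merw_X d w (Suc n) i"
  by (simp add: merw_S_def)

lemma merw_X_local: "(\<And>k. k < n \<Longrightarrow> w k = w' k) \<Longrightarrow> merw_X d w n = merw_X d w' n"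
  unfolding merw_X_def using walk_local by metis

lemma merw_S_local: "(\<And>k. k < n \<Longrightarrow> w k = w' k) \<Longrightarrow> merw_S d w n = merw_S d w' n"
  unfolding merw_S_def by (intro ext sum.cong refl, rule fun_cong[OF merw_X_local]) auto

lemma cyc_alt: "cyc_mat d i l = (if i < d \<and> l = (i + 1) mod d then 1 else 0)"
  unfolding cyc_mat_def
  by (cases "i + 1 < d") (auto simp: mod_if)

lemma Jpow: "mat_pow d (cyc_mat d) k i j = (if i < d \<and> j < d \<and> j = (i + k) mod d then 1 else 0)"
proof (induction k arbitrary: i j)
  case 0 then show ?case by (auto simp: mat_pow_def id_mat_def)
next
  case (Suc k)
  have "mat_pow d (cyc_mat d) (Suc k) i j = (\<Sum>l<d. cyc_mat d i l * mat_pow d (cyc_mat d) k l j)"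
    by (simp add: mat_pow_def mat_mult_def)
  also have "\<dots> = (\<Sum>l<d. if i < d \<and> l = (i+1) mod d then mat_pow d (cyc_mat d) k l j else 0)"
    by (intro sum.cong refl) (simp add: cyc_alt)
  also have "\<dots> = (if i < d \<and> j < d \<and> j = (i + Suc k) mod d then 1 else 0)"
  proof (cases "i < d")
    case True
    then have "(i+1) mod d < d" by simp
    then have "(\<Sum>l<d. if i < d \<and> l = (i+1) mod d then mat_pow d (cyc_mat d) k l j else 0)
       = mat_pow d (cyc_mat d) k ((i+1) mod d) j" using True by (simp add: sum.delta)
    also have "\<dots> = (if j < d \<and> j = ((i+1) mod d + k) mod d then 1 else 0)"
      using Suc \<open>(i+1) mod d < d\<close> by simp
    also have "((i+1) mod d + k) mod d = (i + Suc k) mod d"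
      by (simp add: mod_add_left_eq)
    finally show ?thesis using True by simp
  qed simp
  finally show ?case .
qed

lemma mat_vec_Jpow: "mat_vec d (mat_pow d (cyc_mat d) k) x i = (if i < d then x ((i + k) mod d) else 0)"
proof (cases "i < d")
  case True
  then have "d > 0" by simp
  have "(\<Sum>j<d. mat_pow d (cyc_mat d) k i j * x j) = (\<Sum>j<d. if j = (i+k) mod d then x j else 0)"
    by (intro sum.cong refl) (simp add: Jpow True)
  also have "\<dots> = x ((i + k) mod d)" using \<open>d>0\<close> by (simp add: sum.delta)
  finally show ?thesis using True by (simp add: mat_vec_def)
qed (simp add: mat_vec_def)

lemma mat_vec_neg: "mat_vec d (- A) x = (\<lambda>i. - mat_vec d A x i)"
  by (auto simp: mat_vec_def sum_negf)

lemma mat_vec_id: "mat_vec d (id_mat d) x i = (if i < d then x i else 0)"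
  using mat_vec_Jpow[of d 0 x i] by (simp add: mat_pow_def)

lemma Jpow0: "mat_pow d (cyc_mat d) 0 = id_mat d"
  by (simp add: mat_pow_def)

lemma rot_bij: fixes d k :: nat shows "d > 0 \<Longrightarrow> bij_betw (\<lambda>i. (i + k) mod d) {..<d} {..<d}"
proof -
  assume d: "d > 0"
  have inj: "inj_on (\<lambda>i. (i + k) mod d) {..<d}"
  proof (rule inj_onI)
    fix i j assume "i \<in> {..<d}" "j \<in> {..<d}" "(i + k) mod d = (j + k) mod d"
    then have "(int i + int k) mod int d = (int j + int k) mod int d"
      by (metis of_nat_add of_nat_mod)
    then have "(int i + int k - int k) mod int d = (int j + int k - int k) mod int d"
      by (intro mod_diff_cong) auto
    then have "int i mod int d = int j mod int d" by simp
    then show "i = j" using \<open>i \<in> {..<d}\<close> \<open>j \<in> {..<d}\<close> by simp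
  qed
  have "(\<lambda>i. (i + k) mod d) ` {..<d} \<subseteq> {..<d}" using d by auto
  then have "(\<lambda>i. (i + k) mod d) ` {..<d} = {..<d}"
    using inj by (simp add: endo_inj_surj)
  then show ?thesis using inj by (simp add: bij_betw_def)
qed

lemma sumsq_rot: fixes d k :: nat and x :: "nat \<Rightarrow> real" shows "d > 0 \<Longrightarrow> (\<Sum>i<d. (x ((i + k) mod d))^2) = (\<Sum>i<d. (x i)^2 :: real)"
  using sum.reindex_bij_betw[OF rot_bij[of d k], of "\<lambda>i. (x i)^2"] by simp

lemma mat_set_eq: "mat_set d = (\<lambda>k. mat_pow d (cyc_mat d) k) ` {..<d} \<union> (\<lambda>k. - mat_pow d (cyc_mat d) k) ` {..<d}"
  unfolding mat_set_def by auto

lemma Jpow_inj: "inj_on (\<lambda>k. mat_pow d (cyc_mat d) k) {..<d}"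
proof (rule inj_onI)
  fix k l assume kl: "k \<in> {..<d}" "l \<in> {..<d}" "mat_pow d (cyc_mat d) k = mat_pow d (cyc_mat d) l"
  have "mat_pow d (cyc_mat d) k 0 k = 1" using kl(1,2) by (simp add: Jpow)
  then have "mat_pow d (cyc_mat d) l 0 k = 1" using kl(3) by simp
  then show "k = l" using kl(1,2) by (simp add: Jpow split: if_splits)
qed

lemma Jpow_ne_neg: "k < d \<Longrightarrow> l < d \<Longrightarrow> mat_pow d (cyc_mat d) k \<noteq> - mat_pow d (cyc_mat d) l"
proof
  assume "k < d" "l < d" "mat_pow d (cyc_mat d) k = - mat_pow d (cyc_mat d) l"
  then have "mat_pow d (cyc_mat d) k 0 k = - mat_pow d (cyc_mat d) l 0 k" by (metis uminus_apply)
  then show False using \<open>k<d\<close> \<open>l<d\<close> by (simp add: Jpow split: if_splits)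
qed

lemma negJpow_inj: "inj_on (\<lambda>k. - mat_pow d (cyc_mat d) k) {..<d}"
proof (rule inj_onI)
  fix k l assume "k \<in> {..<d}" "l \<in> {..<d}" "- mat_pow d (cyc_mat d) k = - mat_pow d (cyc_mat d) l"
  then have "\<And>i j. - mat_pow d (cyc_mat d) k i j = - mat_pow d (cyc_mat d) l i j" by (metis uminus_apply)
  then have "mat_pow d (cyc_mat d) k = mat_pow d (cyc_mat d) l" by (intro ext) simp
  then show "k = l" using Jpow_inj[of d] \<open>k \<in> {..<d}\<close> \<open>l \<in> {..<d}\<close> unfolding inj_on_def by blast
qed

lemma finite_mat_set: "finite (mat_set d)" by (simp add: mat_set_eq)

lemma card_mat_set: "card (mat_set d) = 2 * d"
proof -
  have disj: "(\<lambda>k. mat_pow d (cyc_mat d) k) ` {..<d} \<inter> (\<lambda>k. - mat_pow d (cyc_mat d) k) ` {..<d} = {}"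
    using Jpow_ne_neg by auto
  show ?thesis unfolding mat_set_eq
    by (subst card_Un_disjoint) (auto simp: disj card_image Jpow_inj negJpow_inj)
qed

lemma id_in_mat_set: "d > 0 \<Longrightarrow> id_mat d \<in> mat_set d"
  unfolding mat_set_eq using Jpow0[of d] by (metis UnI1 image_eqI lessThan_iff)

lemma card_Ms: "d > 0 \<Longrightarrow> card (mat_set d - {id_mat d}) = 2 * d - 1"
  by (simp add: card_Diff_singleton finite_mat_set id_in_mat_set card_mat_set)

lemma mat_set_cases: "A \<in> mat_set d \<Longrightarrow> (\<exists>k<d. A = mat_pow d (cyc_mat d) k \<or> A = - mat_pow d (cyc_mat d) k)"
  unfolding mat_set_def by auto

lemma mat_set_norm: "d > 0 \<Longrightarrow> A \<in> mat_set d \<Longrightarrow> (\<Sum>i<d. (mat_vec d A x i)^2) = (\<Sum>i<d. (x i)^2)"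
  using mat_set_cases[of A d] 
  by (auto simp: mat_vec_neg mat_vec_Jpow sumsq_rot)

lemma mat_set_bound: "A \<in> mat_set d \<Longrightarrow> (\<And>j. \<bar>x j\<bar> \<le> 1) \<Longrightarrow> \<bar>mat_vec d A x i\<bar> \<le> 1"
  using mat_set_cases[of A d] 
  by (auto simp: mat_vec_neg mat_vec_Jpow)

lemma sum_mat_set: "(\<Sum>A\<in>mat_set d. mat_vec d A x i) = 0"
proof -
  have disj: "(\<lambda>k. mat_pow d (cyc_mat d) k) ` {..<d} \<inter> (\<lambda>k. - mat_pow d (cyc_mat d) k) ` {..<d} = {}"
    using Jpow_ne_neg by auto
  show ?thesis unfolding mat_set_eq
    by (subst sum.union_disjoint) (auto simp: disj sum.reindex Jpow_inj negJpow_inj mat_vec_neg sum_negf)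
qed

lemma sum_Ms: "d > 0 \<Longrightarrow> (\<Sum>A\<in>mat_set d - {id_mat d}. mat_vec d A x i) = - (if i < d then x i else 0)"
  using sum_mat_set[of d x i] 
  by (simp add: sum_diff1 finite_mat_set id_in_mat_set mat_vec_id)

lemma pps: "product_prob_space (\<lambda>k. measure_pmf (q k))"
  unfolding product_prob_space_def product_prob_space_axioms_def product_sigma_finite_def
  by (auto simp: prob_space_measure_pmf prob_space_imp_sigma_finite)

lemma coord_meas_borel: "i \<in> I \<Longrightarrow> (\<lambda>w. g (w i)) \<in> borel_measurable (PiM I (\<lambda>k. measure_pmf (q k)))"
  by (rule measurable_compose[OF measurable_component_singleton]) auto

lemma coord_meas_count: "i \<in> I \<Longrightarrow> (\<lambda>w. g (w i)) \<in> measurable (PiM I (\<lambda>k. measure_pmf (q k))) (count_space UNIV)"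
  by (rule measurable_compose[OF measurable_component_singleton]) auto

lemma walk_meas: "{..<n} \<subseteq> I \<Longrightarrow> (\<lambda>w. (walk_steps d w n ! k) j) \<in> borel_measurable (PiM I (\<lambda>k. measure_pmf (q k)))"
proof (induction n arbitrary: k j rule: less_induct)
  case (less n)
  show ?case
  proof (cases n)
    case 0 then show ?thesis by simp
  next
    case (Suc n')
    show ?thesis
    proof (cases n')
      case 0
      have "0 \<in> I" using Suc less.prems 0 by auto
      then show ?thesis using Suc 0
        using coord_meas_borel[of 0 I "\<lambda>x. ([fst x] ! k) j" q] by simp
    next
      case (Suc m)
      have nn: "n = Suc (Suc m)" using Suc \<open>n = Suc n'\<close> by simp
      have sub: "{..<Suc m} \<subseteq> I" using less.prems nn by auto
      have IH: "\<And>k j. (\<lambda>w. (walk_steps d w (Suc m) ! k) j) \<in> borel_measurable (PiM I (\<lambda>k. measure_pmf (q k)))"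
        using less.IH[of "Suc m", OF _ sub] nn by auto
      have SmI: "Suc m \<in> I" using less.prems nn by auto
      show ?thesis
      proof (cases "k < Suc m")
        case True
        have "(\<lambda>w. (walk_steps d w n ! k) j) = (\<lambda>w. (walk_steps d w (Suc m) ! k) j)"
          using True nn by (simp add: Let_def nth_append)
        then show ?thesis using IH by simp
      next
        case False
        show ?thesis
        proof (cases "k = Suc m")
          case True
          have eq0: "(\<lambda>w. (walk_steps d w n ! k) j) = (\<lambda>w. mat_vec d (snd (snd (w (Suc m))))
               (walk_steps d w (Suc m) ! (fst (snd (w (Suc m))) - 1)) j)"
            using True nn by (simp add: Let_def nth_append)
          have eq: "(\<lambda>w. (walk_steps d w n ! k) j) = (\<lambda>w. if j < d then (\<Sum>l<d. snd (snd (w (Suc m))) j l *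
               (walk_steps d w (Suc m) ! (fst (snd (w (Suc m))) - 1)) l) else 0)"
            unfolding eq0 mat_vec_def by simp
          have b: "(\<lambda>w. fst (snd (w (Suc m))) - 1) \<in> measurable (PiM I (\<lambda>k. measure_pmf (q k))) (count_space UNIV)"
            using coord_meas_count[OF SmI, of "\<lambda>x. fst (snd x) - 1" q] by simp
          have c: "(\<lambda>w. (walk_steps d w (Suc m) ! (fst (snd (w (Suc m))) - 1)) l) \<in> borel_measurable (PiM I (\<lambda>k. measure_pmf (q k)))" for l
            by (rule measurable_compose_countable[OF _ b]) (rule IH)
          have a: "(\<lambda>w. snd (snd (w (Suc m))) j l) \<in> borel_measurable (PiM I (\<lambda>k. measure_pmf (q k)))" for l
            using coord_meas_borel[OF SmI, of "\<lambda>x. snd (snd x) j l" q] by simp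
          show ?thesis unfolding eq using a c by measurable
        next
          case False
          then have "Suc (Suc m) \<le> k" using \<open>\<not> k < Suc m\<close> by simp
          then have "(\<lambda>w. (walk_steps d w n ! k) j) = (\<lambda>w. ([] ! (k - n)) j)"
            using nn walk_beyond by metis
          then show ?thesis by simp
        qed
      qed
    qed
  qed
qed

lemma X_meas: "{..<n} \<subseteq> I \<Longrightarrow> (\<lambda>w. merw_X d w n j) \<in> borel_measurable (PiM I (\<lambda>k. measure_pmf (q k)))"
  unfolding merw_X_def using walk_meas[where k="n - 1"] by simp

lemma S_meas: "{..<n} \<subseteq> I \<Longrightarrow> (\<lambda>w. merw_S d w n j) \<in> borel_measurable (PiM I (\<lambda>k. measure_pmf (q k)))"
  unfolding merw_S_def
  by (intro borel_measurable_sum X_meas) auto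

lemma peel:
  fixes f h :: "(nat \<Rightarrow> 'a) \<Rightarrow> ennreal" and q :: "nat \<Rightarrow> 'a pmf"
  defines "M \<equiv> (\<lambda>k. measure_pmf (q k))"
  assumes fm: "f \<in> borel_measurable (PiM {..n} M)"
    and hm: "h \<in> borel_measurable (PiM {..<n} M)"
    and floc: "\<And>w w'. (\<And>k. k \<le> n \<Longrightarrow> w k = w' k) \<Longrightarrow> f w = f w'"
    and hloc: "\<And>w w'. (\<And>k. k < n \<Longrightarrow> w k = w' k) \<Longrightarrow> h w = h w'"
    and inner: "\<And>w. (\<integral>\<^sup>+ y. f (w(n := y)) \<partial>M n) = h w"
  shows "(\<integral>\<^sup>+ w. f w \<partial>PiM UNIV M) = (\<integral>\<^sup>+ w. h w \<partial>PiM UNIV M)"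
proof -
  interpret P: product_prob_space M UNIV unfolding M_def by (rule pps)
  have "(\<integral>\<^sup>+ w. f w \<partial>PiM UNIV M) = (\<integral>\<^sup>+ w. f (restrict w {..n}) \<partial>PiM UNIV M)"
    by (intro nn_integral_cong floc) auto
  also have "\<dots> = (\<integral>\<^sup>+ x. f x \<partial>distr (PiM UNIV M) (PiM {..n} M) (\<lambda>w. restrict w {..n}))"
    apply (rule nn_integral_distr[symmetric])
    apply (rule measurable_restrict_subset)
    apply simp
    apply (simp add: fm)
    done
  also have "\<dots> = (\<integral>\<^sup>+ x. f x \<partial>PiM {..n} M)"
    by (subst P.distr_PiM_restrict_finite) auto
  also have "\<dots> = (\<integral>\<^sup>+ x. f x \<partial>PiM (insert n {..<n}) M)"
    by (simp add: lessThan_Suc_atMost[symmetric] lessThan_Suc)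
  also have "\<dots> = (\<integral>\<^sup>+ x. (\<integral>\<^sup>+ y. f (x(n := y)) \<partial>M n) \<partial>PiM {..<n} M)"
    by (rule P.product_nn_integral_insert) (use fm in \<open>auto simp: lessThan_Suc_atMost[symmetric] lessThan_Suc\<close>)
  also have "\<dots> = (\<integral>\<^sup>+ x. h x \<partial>PiM {..<n} M)"
    by (simp add: inner)
  also have "\<dots> = (\<integral>\<^sup>+ x. h x \<partial>distr (PiM UNIV M) (PiM {..<n} M) (\<lambda>w. restrict w {..<n}))"
    by (subst P.distr_PiM_restrict_finite) auto
  also have "\<dots> = (\<integral>\<^sup>+ w. h (restrict w {..<n}) \<partial>PiM UNIV M)"
    apply (rule nn_integral_distr)
    apply (rule measurable_restrict_subset)
    apply simp
    apply (simp add: hm)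
    done
  also have "\<dots> = (\<integral>\<^sup>+ w. h w \<partial>PiM UNIV M)"
    by (intro nn_integral_cong hloc) auto
  finally show ?thesis .
qed

definition Uset :: "nat \<Rightarrow> (nat \<Rightarrow> real) set" where
  "Uset d = {unit_vec d i | i. i < d} \<union> {- unit_vec d i | i. i < d}"

lemma Uset_eq: "Uset d = (unit_vec d) ` {..<d} \<union> (\<lambda>i. - unit_vec d i) ` {..<d}"
  unfolding Uset_def by auto

lemma set_step: "d > 0 \<Longrightarrow> set_pmf (step_pmf d) = Uset d"
  unfolding step_pmf_def Uset_def[symmetric]
  by (rule set_pmf_of_set) (auto simp: Uset_eq)

lemma Uset_props: "v \<in> Uset d \<Longrightarrow> (\<forall>i. \<bar>v i\<bar> \<le> 1) \<and> (\<Sum>i<d. (v i)^2) = 1"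
proof -
  assume "v \<in> Uset d"
  then obtain j s where j: "j < d" "v = unit_vec d j \<or> v = - unit_vec d j"
    unfolding Uset_def by auto
  have "(\<Sum>i<d. (unit_vec d j i)^2) = 1"
    using j(1) by (simp add: unit_vec_def if_distrib[where f="\<lambda>x. x^2"] sum.delta cong: if_cong)
  moreover have "\<forall>i. \<bar>unit_vec d j i\<bar> \<le> 1" by (simp add: unit_vec_def)
  ultimately show ?thesis using j(2) by auto
qed

lemma Ms_ne: "d > 0 \<Longrightarrow> mat_set d - {id_mat d} \<noteq> {}"
proof
  assume "d > 0" and e: "mat_set d - {id_mat d} = {}"
  have "card (mat_set d - {id_mat d}) = 0" by (simp only: e card.empty)
  then show False using card_Ms[of d] \<open>d > 0\<close> by simp
qed

lemma set_mat_pmf: "d > 0 \<Longrightarrow> set_pmf (mat_pmf d p) \<subseteq> mat_set d"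
proof -
  assume d: "d > 0"
  have "set_pmf (pmf_of_set (mat_set d - {id_mat d})) = mat_set d - {id_mat d}"
    using Ms_ne[OF d] finite_mat_set[of d] by (intro set_pmf_of_set) auto
  then show ?thesis unfolding mat_pmf_def set_bind_pmf using id_in_mat_set[OF d]
    by (intro UN_least) (simp split: if_split)
qed

lemma set_innov: "set_pmf (innov d p n) = set_pmf (step_pmf d) \<times> {1..max 1 n} \<times> set_pmf (mat_pmf d p)"
  unfolding innov_def by simp

lemma mat_nn:
  assumes d: "d > 0" and p: "0 \<le> p" "p \<le> 1" and F: "\<And>A. F A \<ge> 0"
  shows "(\<integral>\<^sup>+ A. ennreal (F A) \<partial>mat_pmf d p) =
    ennreal (p * F (id_mat d) + (1 - p) / (2 * real d - 1) * (\<Sum>A\<in>mat_set d - {id_mat d}. F A))"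
proof -
  let ?Ms = "mat_set d - {id_mat d}"
  have fin: "finite ?Ms" using finite_mat_set by simp
  have c: "real (card ?Ms) = 2 * real d - 1" using card_Ms[OF d] d by simp
  have cpos: "2 * real d - 1 > 0" using d by simp
  have "(\<integral>\<^sup>+ A. ennreal (F A) \<partial>mat_pmf d p) =
     ennreal (F (id_mat d)) * ennreal p + (\<integral>\<^sup>+ A. ennreal (F A) \<partial>pmf_of_set ?Ms) * ennreal (1 - p)"
    unfolding mat_pmf_def using p by (simp add: F)
  also have "(\<integral>\<^sup>+ A. ennreal (F A) \<partial>pmf_of_set ?Ms) = ennreal ((\<Sum>A\<in>?Ms. F A) / (2 * real d - 1))"
    using Ms_ne[OF d] fin c cpos
    by (simp add: nn_integral_pmf_of_set F sum_nonneg ennreal_of_nat_eq_real_of_nat divide_ennreal)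
  finally have e: "(\<integral>\<^sup>+ A. ennreal (F A) \<partial>mat_pmf d p) = ennreal (F (id_mat d)) * ennreal p +
      ennreal ((\<Sum>A\<in>?Ms. F A) / (2 * real d - 1)) * ennreal (1 - p)" .
  have s0: "(\<Sum>A\<in>?Ms. F A) / (2 * real d - 1) \<ge> 0" using cpos F by (simp add: sum_nonneg)
  have m1: "ennreal (F (id_mat d)) * ennreal p = ennreal (F (id_mat d) * p)"
    by (rule ennreal_mult''[symmetric]) (use p in simp)
  have m2: "ennreal ((\<Sum>A\<in>?Ms. F A) / (2 * real d - 1)) * ennreal (1 - p) =
     ennreal ((\<Sum>A\<in>?Ms. F A) / (2 * real d - 1) * (1 - p))"
    by (rule ennreal_mult''[symmetric]) (use p in simp)
  have pl: "ennreal (F (id_mat d) * p + (\<Sum>A\<in>?Ms. F A) / (2 * real d - 1) * (1 - p)) =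
      ennreal (F (id_mat d) * p) + ennreal ((\<Sum>A\<in>?Ms. F A) / (2 * real d - 1) * (1 - p))"
  proof (rule ennreal_plus)
    show "0 \<le> F (id_mat d) * p" using F p by simp
    show "0 \<le> (\<Sum>A\<in>?Ms. F A) / (2 * real d - 1) * (1 - p)"
      using s0 p by (intro mult_nonneg_nonneg) auto
  qed
  have B: "F (id_mat d) * p + (\<Sum>A\<in>?Ms. F A) / (2 * real d - 1) * (1 - p) =
     p * F (id_mat d) + (1 - p) / (2 * real d - 1) * (\<Sum>A\<in>?Ms. F A)"
    by (simp add: field_simps)
  show ?thesis unfolding e m1 m2 pl[symmetric] B ..
qed

lemma mat_avg:
  fixes s x :: "nat \<Rightarrow> real"
  assumes d: "d > 0"
  defines "G \<equiv> (\<lambda>A. \<Sum>i<d. (s i + mat_vec d A x i)^2)"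
  shows "p * G (id_mat d) + (1 - p) / (2 * real d - 1) * (\<Sum>A\<in>mat_set d - {id_mat d}. G A)
    = (\<Sum>i<d. (s i)^2) + (\<Sum>i<d. (x i)^2) + 2 * ((2 * real d * p - 1) / (2 * real d - 1)) * (\<Sum>i<d. s i * x i)"
proof -
  let ?Ms = "mat_set d - {id_mat d}"
  let ?Q = "\<Sum>i<d. (s i)^2" and ?N = "\<Sum>i<d. (x i)^2" and ?D = "\<Sum>i<d. s i * x i"
  have cpos: "2 * real d - 1 > 0" using d by simp
  have GA: "G A = ?Q + 2 * (\<Sum>i<d. s i * mat_vec d A x i) + ?N" if "A \<in> mat_set d" for A
  proof -
    have "G A = (\<Sum>i<d. (s i)^2 + 2 * (s i * mat_vec d A x i) + (mat_vec d A x i)^2)"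
      unfolding G_def by (intro sum.cong refl) (simp add: power2_eq_square algebra_simps)
    also have "\<dots> = ?Q + 2 * (\<Sum>i<d. s i * mat_vec d A x i) + (\<Sum>i<d. (mat_vec d A x i)^2)"
      by (simp add: sum.distrib sum_distrib_left)
    also have "(\<Sum>i<d. (mat_vec d A x i)^2) = ?N" using mat_set_norm[OF d that] .
    finally show ?thesis .
  qed
  have GI: "G (id_mat d) = ?Q + 2 * ?D + ?N"
    using GA[OF id_in_mat_set[OF d]] by (simp add: mat_vec_id)
  have "(\<Sum>A\<in>?Ms. G A) = (\<Sum>A\<in>?Ms. ?Q + ?N + 2 * (\<Sum>i<d. s i * mat_vec d A x i))"
    by (intro sum.cong refl) (simp add: GA)
  also have "\<dots> = real (card ?Ms) * (?Q + ?N) + 2 * (\<Sum>i<d. s i * (\<Sum>A\<in>?Ms. mat_vec d A x i))"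
  proof -
    have "(\<Sum>A\<in>?Ms. ?Q + ?N + 2 * (\<Sum>i<d. s i * mat_vec d A x i)) =
      real (card ?Ms) * (?Q + ?N) + 2 * (\<Sum>A\<in>?Ms. \<Sum>i<d. s i * mat_vec d A x i)"
      by (simp add: sum.distrib sum_distrib_left)
    also have "(\<Sum>A\<in>?Ms. \<Sum>i<d. s i * mat_vec d A x i) = (\<Sum>i<d. \<Sum>A\<in>?Ms. s i * mat_vec d A x i)"
      by (rule sum.swap)
    also have "\<dots> = (\<Sum>i<d. s i * (\<Sum>A\<in>?Ms. mat_vec d A x i))"
      by (simp add: sum_distrib_left)
    finally show ?thesis .
  qed
  also have "(\<Sum>i<d. s i * (\<Sum>A\<in>?Ms. mat_vec d A x i)) = - ?D"
    by (simp add: sum_Ms[OF d] sum_negf)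
  also have "real (card ?Ms) = 2 * real d - 1" using card_Ms[OF d] d by simp
  finally have SM: "(\<Sum>A\<in>?Ms. G A) = (2 * real d - 1) * (?Q + ?N) - 2 * ?D" by simp
  show ?thesis unfolding GI SM using cpos
    by (simp add: field_simps)
qed

definition Qf :: "nat \<Rightarrow> (nat \<Rightarrow> ((nat \<Rightarrow> real) \<times> nat \<times> (nat \<Rightarrow> nat \<Rightarrow> real))) \<Rightarrow> nat \<Rightarrow> real" where
  "Qf d w n = (\<Sum>i<d. (merw_S d w n i)^2)"

definition Nf :: "nat \<Rightarrow> (nat \<Rightarrow> ((nat \<Rightarrow> real) \<times> nat \<times> (nat \<Rightarrow> nat \<Rightarrow> real))) \<Rightarrow> nat \<Rightarrow> real" where
  "Nf d w b = (\<Sum>i<d. (merw_X d w b i)^2)"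

lemma step_S:
  assumes "n \<ge> 1" "b \<in> {1..n}"
  shows "merw_S d (w(n := (v, b, A))) (Suc n) i = merw_S d w n i + mat_vec d A (merw_X d w b) i"
proof -
  obtain m where n: "n = Suc m" using assms(1) by (cases n) auto
  let ?w = "w(n := (v, b, A))"
  have loc: "\<And>k. k < n \<Longrightarrow> ?w k = w k" by simp
  have "merw_S d ?w n = merw_S d w n" by (rule merw_S_local) (simp add: loc)
  moreover have "merw_X d ?w (Suc n) = mat_vec d A (merw_X d w b)"
  proof -
    have "merw_X d ?w (Suc n) = mat_vec d A (walk_steps d ?w (Suc m) ! (b - 1))"
      unfolding n merw_X_SS by simp
    also have "walk_steps d ?w (Suc m) = walk_steps d w (Suc m)"
      by (rule walk_local) (simp add: n)
    also have "walk_steps d w (Suc m) ! (b - 1) = merw_X d w (Suc (b - 1))"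
      using assms(2) n by (intro walk_prefix) auto
    also have "Suc (b - 1) = b" using assms(2) by auto
    finally show ?thesis .
  qed
  ultimately show ?thesis by (simp add: merw_S_Suc)
qed

lemma inner_Q:
  assumes d: "d > 0" and p: "0 \<le> p" "p \<le> 1" and n: "n \<ge> 1"
  shows "(\<integral>\<^sup>+ y. ennreal (Qf d (w(n := y)) (Suc n)) \<partial>innov d p n) =
    ennreal ((1 + 2 * ((2 * real d * p - 1) / (2 * real d - 1)) / real n) * Qf d w n
       + (\<Sum>b\<in>{1..n}. Nf d w b) / real n)"
proof -
  let ?a = "(2 * real d * p - 1) / (2 * real d - 1)"
  let ?s = "merw_S d w n"
  define H where "H b = Qf d w n + Nf d w b + 2 * ?a * (\<Sum>i<d. ?s i * merw_X d w b i)" for b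
  have Hnn: "H b \<ge> 0" if "b \<in> {1..n}" for b
  proof -
    have "H b = p * (\<Sum>i<d. (?s i + mat_vec d (id_mat d) (merw_X d w b) i)^2) + (1 - p) / (2 * real d - 1) *
       (\<Sum>A\<in>mat_set d - {id_mat d}. (\<Sum>i<d. (?s i + mat_vec d A (merw_X d w b) i)^2))"
      unfolding H_def Qf_def Nf_def by (rule mat_avg[OF d, symmetric])
    also have "\<dots> \<ge> 0" using p d by (intro add_nonneg_nonneg mult_nonneg_nonneg sum_nonneg divide_nonneg_nonneg) auto
    finally show ?thesis .
  qed
  have inner1: "(\<integral>\<^sup>+ A. ennreal (Qf d (w(n := (v, b, A))) (Suc n)) \<partial>mat_pmf d p) = ennreal (H b)"
    if b: "b \<in> {1..n}" for v b
  proof -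
    have "(\<integral>\<^sup>+ A. ennreal (Qf d (w(n := (v, b, A))) (Suc n)) \<partial>mat_pmf d p)
       = (\<integral>\<^sup>+ A. ennreal (\<Sum>i<d. (?s i + mat_vec d A (merw_X d w b) i)^2) \<partial>mat_pmf d p)"
      unfolding Qf_def by (simp add: step_S[OF n b])
    also have "\<dots> = ennreal (p * (\<Sum>i<d. (?s i + mat_vec d (id_mat d) (merw_X d w b) i)^2) + (1 - p) / (2 * real d - 1) *
       (\<Sum>A\<in>mat_set d - {id_mat d}. (\<Sum>i<d. (?s i + mat_vec d A (merw_X d w b) i)^2)))"
      by (rule mat_nn[OF d p]) (simp add: sum_nonneg)
    also have "\<dots> = ennreal (H b)"
      unfolding H_def Qf_def Nf_def by (simp only: mat_avg[OF d])
    finally show ?thesis .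
  qed
  have "(\<integral>\<^sup>+ y. ennreal (Qf d (w(n := y)) (Suc n)) \<partial>innov d p n) =
     (\<integral>\<^sup>+ v. \<integral>\<^sup>+ b. \<integral>\<^sup>+ A. ennreal (Qf d (w(n := (v, b, A))) (Suc n)) \<partial>mat_pmf d p \<partial>pmf_of_set {1..n} \<partial>step_pmf d)"
    unfolding innov_def using n by (simp add: nn_integral_pair_pmf' max_def)
  also have "\<dots> = (\<integral>\<^sup>+ v. (\<Sum>b\<in>{1..n}. ennreal (H b)) / of_nat (card {1..n}) \<partial>step_pmf d)"
  proof -
    have e: "(\<Sum>b\<in>{1..n}. \<integral>\<^sup>+ A. ennreal (Qf d (w(n := (v, b, A))) (Suc n)) \<partial>mat_pmf d p)
      = (\<Sum>b\<in>{1..n}. ennreal (H b))" for v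
      by (intro sum.cong refl inner1) simp
    have ne: "{1..n} \<noteq> {}" using n by simp
    show ?thesis by (simp only: nn_integral_pmf_of_set[OF ne finite_atLeastAtMost] e)
  qed
  also have "\<dots> = (\<Sum>b\<in>{1..n}. ennreal (H b)) / of_nat n"
    by (simp add: measure_pmf.emeasure_space_1)
  also have "\<dots> = ennreal ((\<Sum>b\<in>{1..n}. H b) / real n)"
  proof -
    have "(\<Sum>b\<in>{1..n}. ennreal (H b)) = ennreal (\<Sum>b\<in>{1..n}. H b)"
      using Hnn by (rule sum_ennreal)
    moreover have "(of_nat n :: ennreal) = ennreal (real n)" by (simp add: ennreal_of_nat_eq_real_of_nat)
    moreover have "ennreal (\<Sum>b\<in>{1..n}. H b) / ennreal (real n) = ennreal ((\<Sum>b\<in>{1..n}. H b) / real n)"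
      using n Hnn by (intro divide_ennreal sum_nonneg) auto
    ultimately show ?thesis by simp
  qed
  also have "(\<Sum>b\<in>{1..n}. H b) / real n = (1 + 2 * ?a / real n) * Qf d w n + (\<Sum>b\<in>{1..n}. Nf d w b) / real n"
  proof -
    have sx: "(\<Sum>b\<in>{1..n}. merw_X d w b i) = ?s i" for i by (simp add: merw_S_def)
    have "(\<Sum>b\<in>{1..n}. (\<Sum>i<d. ?s i * merw_X d w b i)) = (\<Sum>i<d. \<Sum>b\<in>{1..n}. ?s i * merw_X d w b i)"
      by (rule sum.swap)
    also have "\<dots> = Qf d w n" unfolding Qf_def
      by (intro sum.cong refl) (simp add: sum_distrib_left[symmetric] merw_S_def power2_eq_square)
    finally have X: "(\<Sum>b\<in>{1..n}. (\<Sum>i<d. ?s i * merw_X d w b i)) = Qf d w n" .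
    have HS: "(\<Sum>b\<in>{1..n}. H b) = real n * Qf d w n + (\<Sum>b\<in>{1..n}. Nf d w b) + 2 * ?a * Qf d w n"
    proof -
      have "(\<Sum>b\<in>{1..n}. H b) = (\<Sum>b\<in>{1..n}. Qf d w n) + (\<Sum>b\<in>{1..n}. Nf d w b) +
         (2 * ?a) * (\<Sum>b\<in>{1..n}. (\<Sum>i<d. ?s i * merw_X d w b i))"
        unfolding H_def by (simp only: sum.distrib sum_distrib_left)
      then show ?thesis unfolding X by simp
    qed
    have gen: "\<And>nn Q N a :: real. nn > 0 \<Longrightarrow> (nn * Q + N + 2 * a * Q) / nn = (1 + 2 * a / nn) * Q + N / nn"
      by (simp add: field_simps)
    show ?thesis unfolding HS by (rule gen) (use n in simp)
  qed
  finally show ?thesis .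
qed

lemma AE_G: "AE w in merw_space d p. \<forall>k. w k \<in> set_pmf (innov d p k)"
  unfolding merw_space_def AE_all_countable
proof
  fix k
  interpret P: product_prob_space "\<lambda>k. measure_pmf (innov d p k)" UNIV by (rule pps)
  show "AE w in PiM UNIV (\<lambda>k. measure_pmf (innov d p k)). w k \<in> set_pmf (innov d p k)"
    by (rule P.AE_component) (auto simp: AE_measure_pmf)
qed

lemma inv_G:
  assumes d: "d > 0" and G: "\<forall>k. w k \<in> set_pmf (innov d p k)"
  shows "m \<ge> 1 \<Longrightarrow> (\<forall>i. \<bar>merw_X d w m i\<bar> \<le> 1) \<and> Nf d w m = 1"
proof (induction m rule: less_induct)
  case (less m)
  show ?case
  proof (cases "m = 1")
    case True
    have "merw_X d w 1 = fst (w 0)" by (simp add: merw_X_def)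
    moreover have "fst (w 0) \<in> Uset d" using G[rule_format, of 0] set_step[OF d] by (auto simp: set_innov)
    ultimately show ?thesis using True Uset_props by (simp add: Nf_def)
  next
    case False
    then obtain n where m: "m = Suc (Suc n)" using less.prems by (cases m; cases "m - 1") auto
    obtain v b A where w: "w (Suc n) = (v, b, A)" by (cases "w (Suc n)") auto
    have b: "b \<in> {1..Suc n}" and A: "A \<in> mat_set d"
      using G[rule_format, of "Suc n"] set_mat_pmf[OF d, of p] w by (auto simp: set_innov)
    have X: "merw_X d w m = mat_vec d A (merw_X d w b)"
    proof -
      have "merw_X d w m = mat_vec d A (walk_steps d w (Suc n) ! (b - 1))"
        unfolding m merw_X_SS w by simp
      also have "walk_steps d w (Suc n) ! (b - 1) = merw_X d w (Suc (b - 1))"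
        using b by (intro walk_prefix) auto
      also have "Suc (b - 1) = b" using b by auto
      finally show ?thesis .
    qed
    have IH: "(\<forall>i. \<bar>merw_X d w b i\<bar> \<le> 1) \<and> Nf d w b = 1"
      using less.IH[of b] b m by auto
    show ?thesis unfolding X Nf_def
      using IH mat_set_bound[OF A] mat_set_norm[OF d A] by (auto simp: Nf_def)
  qed
qed

lemma Qf_meas: "{..<n} \<subseteq> I \<Longrightarrow> (\<lambda>w. ennreal (Qf d w n)) \<in> borel_measurable (PiM I (\<lambda>k. measure_pmf (q k)))"
  unfolding Qf_def
  by (intro measurable_compose[OF _ measurable_ennreal] borel_measurable_sum borel_measurable_power S_meas)

lemma Nsum_meas: "{..<n} \<subseteq> I \<Longrightarrow> (\<lambda>w. (\<Sum>b\<in>{1..n}. Nf d w b)) \<in> borel_measurable (PiM I (\<lambda>k. measure_pmf (q k)))"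
  unfolding Nf_def
  by (intro borel_measurable_sum borel_measurable_power X_meas) auto

lemma Qf_local: "(\<And>k. k < n \<Longrightarrow> w k = w' k) \<Longrightarrow> Qf d w n = Qf d w' n"
  unfolding Qf_def using merw_S_local by metis

lemma Nsum_local: "(\<And>k. k < n \<Longrightarrow> w k = w' k) \<Longrightarrow> (\<Sum>b\<in>{1..n}. Nf d w b) = (\<Sum>b\<in>{1..n}. Nf d w' b)"
  unfolding Nf_def by (intro sum.cong refl) (metis (no_types) atLeastAtMost_iff less_le_trans merw_X_local leD le_less_linear)

lemma peel_Q:
  assumes d: "d > 0" and p: "0 \<le> p" "p \<le> 1" and n: "n \<ge> 1"
  shows "(\<integral>\<^sup>+ w. ennreal (Qf d w (Suc n)) \<partial>merw_space d p) =
    (\<integral>\<^sup>+ w. ennreal ((1 + 2 * ((2 * real d * p - 1) / (2 * real d - 1)) / real n) * Qf d w n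
       + (\<Sum>b\<in>{1..n}. Nf d w b) / real n) \<partial>merw_space d p)"
  unfolding merw_space_def
proof (rule peel)
  show "(\<lambda>w. ennreal (Qf d w (Suc n))) \<in> borel_measurable (PiM {..n} (\<lambda>k. measure_pmf (innov d p k)))"
    by (rule Qf_meas) auto
  show "(\<lambda>w. ennreal ((1 + 2 * ((2 * real d * p - 1) / (2 * real d - 1)) / real n) * Qf d w n
       + (\<Sum>b\<in>{1..n}. Nf d w b) / real n)) \<in> borel_measurable (PiM {..<n} (\<lambda>k. measure_pmf (innov d p k)))"
  proof -
    have "(\<lambda>w. Qf d w n) \<in> borel_measurable (PiM {..<n} (\<lambda>k. measure_pmf (innov d p k)))"
      unfolding Qf_def by (intro borel_measurable_sum borel_measurable_power S_meas) auto
    moreover have "(\<lambda>w. (\<Sum>b\<in>{1..n}. Nf d w b)) \<in> borel_measurable (PiM {..<n} (\<lambda>k. measure_pmf (innov d p k)))"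
      by (rule Nsum_meas) auto
    ultimately show ?thesis
      by (intro measurable_compose[OF _ measurable_ennreal] borel_measurable_add borel_measurable_times
          borel_measurable_divide borel_measurable_const)
  qed
  show "ennreal (Qf d w (Suc n)) = ennreal (Qf d w' (Suc n))" if "\<And>k. k \<le> n \<Longrightarrow> w k = w' k" for w w'
    using Qf_local[of "Suc n" w w' d] that by simp
  show "ennreal ((1 + 2 * ((2 * real d * p - 1) / (2 * real d - 1)) / real n) * Qf d w n
       + (\<Sum>b\<in>{1..n}. Nf d w b) / real n) = ennreal ((1 + 2 * ((2 * real d * p - 1) / (2 * real d - 1)) / real n) * Qf d w' n
       + (\<Sum>b\<in>{1..n}. Nf d w' b) / real n)" if "\<And>k. k < n \<Longrightarrow> w k = w' k" for w w'
    using Qf_local[of n w w' d] Nsum_local[of n w w' d] that by simp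
  show "(\<integral>\<^sup>+ y. ennreal (Qf d (w(n := y)) (Suc n)) \<partial>measure_pmf (innov d p n)) =
     ennreal ((1 + 2 * ((2 * real d * p - 1) / (2 * real d - 1)) / real n) * Qf d w n
       + (\<Sum>b\<in>{1..n}. Nf d w b) / real n)" for w
    by (rule inner_Q[OF d p n])
qed

lemma Q1: "Qf d w 1 = Nf d w 1"
  by (simp add: Qf_def Nf_def merw_S_def)

lemma Q1': "Qf d w (Suc 0) = Nf d w (Suc 0)"
  using Q1 by simp

lemma Q0: "Qf d w 0 = 0"
  by (simp add: Qf_def merw_S_def)

lemma Qf_nonneg: "Qf d w n \<ge> 0"
  by (simp add: Qf_def sum_nonneg)

lemma E_bound:
  assumes d: "d \<ge> 1" and p: "0 \<le> p" "p \<le> 1" and pd: "p < (2 * real d + 1) / (4 * real d)"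
  defines "a \<equiv> (2 * real d * p - 1) / (2 * real d - 1)"
  defines "c \<equiv> max 1 (1 / (1 - 2 * a))"
  shows "(\<integral>\<^sup>+ w. ennreal (Qf d w n) \<partial>merw_space d p) \<le> ennreal (c * real n)"
proof -
  interpret P: product_prob_space "\<lambda>k. measure_pmf (innov d p k)" UNIV by (rule pps)
  have sp1: "emeasure (merw_space d p) (space (merw_space d p)) = 1"
    unfolding merw_space_def by (rule P.P.emeasure_space_1)
  have d0: "d > 0" using d by simp
  have cpos: "2 * real d - 1 > 0" using d by simp
  have a_lt: "a < 1 / 2"
  proof -
    have "4 * real d * p < 2 * real d + 1" using pd d by (simp add: field_simps)
    then have "2 * (2 * real d * p - 1) < 2 * real d - 1" by simp
    then show ?thesis unfolding a_def using cpos by (simp add: field_simps)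
  qed
  have c1: "c \<ge> 1" unfolding c_def by simp
  have c2: "c * (1 - 2 * a) \<ge> 1"
  proof -
    have "1 / (1 - 2 * a) \<le> c" unfolding c_def by simp
    then show ?thesis using a_lt by (simp add: field_simps)
  qed
  have AEN: "AE w in merw_space d p. (\<Sum>b\<in>{1..m}. Nf d w b) = real m" for m
    using AE_G[of d p]
  proof eventually_elim
    case (elim w)
    have "(\<Sum>b\<in>{1..m}. Nf d w b) = (\<Sum>b\<in>{1..m}. 1)"
      by (intro sum.cong refl) (use inv_G[OF d0 elim] in auto)
    then show ?case by simp
  qed
  have Smeas: "(\<lambda>w. ennreal (Qf d w m)) \<in> borel_measurable (merw_space d p)" for m
    unfolding merw_space_def by (rule Qf_meas) auto
  show ?thesis
  proof (induction n)
    case 0 then show ?case by (simp add: Q0)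
  next
    case (Suc m)
    show ?case
    proof (cases "m = 0")
      case True
      have "(\<integral>\<^sup>+ w. ennreal (Qf d w 1) \<partial>merw_space d p) = (\<integral>\<^sup>+ w. 1 \<partial>merw_space d p)"
        by (rule nn_integral_cong_AE) (use AEN[of 1] in \<open>auto simp: Q1'\<close>)
      also have "\<dots> = 1" using sp1 by simp
      finally show ?thesis using True c1 by simp
    next
      case False
      then have m1: "m \<ge> 1" by simp
      define k where "k = max 0 (1 + 2 * a / real m)"
      have k0: "k \<ge> 0" unfolding k_def by simp
      have "(\<integral>\<^sup>+ w. ennreal (Qf d w (Suc m)) \<partial>merw_space d p) =
        (\<integral>\<^sup>+ w. ennreal ((1 + 2 * a / real m) * Qf d w m + (\<Sum>b\<in>{1..m}. Nf d w b) / real m) \<partial>merw_space d p)"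
        unfolding a_def by (rule peel_Q[OF d0 p m1])
      also have "\<dots> = (\<integral>\<^sup>+ w. ennreal ((1 + 2 * a / real m) * Qf d w m + 1) \<partial>merw_space d p)"
        by (rule nn_integral_cong_AE) (use AEN[of m] m1 in auto)
      also have "\<dots> \<le> (\<integral>\<^sup>+ w. ennreal k * ennreal (Qf d w m) + 1 \<partial>merw_space d p)"
      proof (rule nn_integral_mono)
        fix w
        have "(1 + 2 * a / real m) * Qf d w m \<le> k * Qf d w m"
          unfolding k_def by (intro mult_right_mono) (auto simp: Qf_nonneg)
        then have "ennreal ((1 + 2 * a / real m) * Qf d w m + 1) \<le> ennreal (k * Qf d w m + 1)"
          by (intro ennreal_leI) simp
        also have "\<dots> = ennreal k * ennreal (Qf d w m) + 1"
          using k0 Qf_nonneg[of d w m] by (simp add: ennreal_plus ennreal_mult)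
        finally show "ennreal ((1 + 2 * a / real m) * Qf d w m + 1) \<le> ennreal k * ennreal (Qf d w m) + 1" .
      qed
      also have "\<dots> = ennreal k * (\<integral>\<^sup>+ w. ennreal (Qf d w m) \<partial>merw_space d p) + 1"
        using Smeas[of m] sp1 by (simp add: nn_integral_add nn_integral_cmult)
      also have "\<dots> \<le> ennreal k * ennreal (c * real m) + 1"
        using Suc.IH by (intro add_mono mult_left_mono) auto
      also have "\<dots> = ennreal (k * (c * real m) + 1)"
        using k0 c1 by (simp add: ennreal_plus ennreal_mult)
      also have "\<dots> \<le> ennreal (c * real (Suc m))"
      proof (rule ennreal_leI)
        show "k * (c * real m) + 1 \<le> c * real (Suc m)"
        proof (cases "1 + 2 * a / real m \<ge> 0")
          case True
          then have "k = 1 + 2 * a / real m" unfolding k_def by simp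
          then have "k * (c * real m) + 1 = c * real m + 2 * a * c + 1" using m1 by (simp add: field_simps)
          also have "\<dots> \<le> c * real m + c" using c2 by (simp add: algebra_simps)
          finally show ?thesis by (simp add: algebra_simps)
        next
          case False
          then have "k = 0" unfolding k_def by simp
          have cm: "c * real m \<ge> 0" using c1 by simp
          have "c * real (Suc m) = c + c * real m" by (simp add: algebra_simps)
          moreover have "k * (c * real m) + 1 = 1" using \<open>k = 0\<close> by simp
          ultimately show ?thesis using c1 cm by linarith
        qed
      qed
      finally show ?thesis .
    qed
  qed
qed

lemma incr_bound:
  fixes s :: "nat \<Rightarrow> real"
  assumes inc: "\<And>n. \<bar>s (Suc n) - s n\<bar> \<le> 1"
  shows "m \<le> n \<Longrightarrow> \<bar>s n - s m\<bar> \<le> real (n - m)"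
proof (induction n)
  case 0 then show ?case by simp
next
  case (Suc n)
  show ?case
  proof (cases "m = Suc n")
    case True then show ?thesis by simp
  next
    case False
    then have "m \<le> n" using Suc.prems by simp
    then have "\<bar>s n - s m\<bar> \<le> real (n - m)" by (rule Suc.IH)
    moreover have "\<bar>s (Suc n) - s n\<bar> \<le> 1" by (rule inc)
    moreover have "real (Suc n - m) = real (n - m) + 1" using \<open>m \<le> n\<close> by simp
    ultimately show ?thesis by linarith
  qed
qed

lemma floor_sqrt_at_top: "filterlim floor_sqrt at_top sequentially"
  unfolding filterlim_at_top eventually_sequentially
proof
  fix Z :: nat
  show "\<exists>N. \<forall>n\<ge>N. Z \<le> floor_sqrt n"
    by (rule exI[of _ "Z^2"]) (auto intro: le_floor_sqrtI)
qed

lemma det_lemma: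
  fixes s :: "nat \<Rightarrow> real"
  assumes s0: "s 0 = 0" and inc: "\<And>n. \<bar>s (Suc n) - s n\<bar> \<le> 1"
    and sub: "(\<lambda>k. s ((k + 1)^2) / real ((k + 1)^2)) \<longlonglongrightarrow> 0"
  shows "(\<lambda>n. s n / real n) \<longlonglongrightarrow> 0"
proof -
  define f where "f k = \<bar>s (k^2) / real (k^2)\<bar> + 2 / real k" for k
  have f0: "f \<longlonglongrightarrow> 0"
  proof -
    have "(\<lambda>k. s ((Suc k)^2) / real ((Suc k)^2)) \<longlonglongrightarrow> 0" using sub by simp
    then have a: "(\<lambda>k. s (k^2) / real (k^2)) \<longlonglongrightarrow> 0"
      by (rule LIMSEQ_imp_Suc[where f="\<lambda>k. s (k^2) / real (k^2)"])
    have b: "(\<lambda>k. 2 / real k) \<longlonglongrightarrow> 0"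
      using tendsto_mult_right_zero[OF lim_inverse_n, of 2] by (simp add: divide_inverse)
    have "(\<lambda>k. \<bar>s (k^2) / real (k^2)\<bar> + 2 / real k) \<longlonglongrightarrow> \<bar>0\<bar> + 0"
      by (intro tendsto_add tendsto_rabs a b)
    then show ?thesis unfolding f_def by simp
  qed
  have fr: "(\<lambda>n. f (floor_sqrt n)) \<longlonglongrightarrow> 0"
    by (rule filterlim_compose[OF f0 floor_sqrt_at_top])
  show ?thesis
  proof (rule Lim_null_comparison[OF _ fr])
    show "\<forall>\<^sub>F n in sequentially. norm (s n / real n) \<le> f (floor_sqrt n)"
      unfolding eventually_sequentially
    proof (intro exI[of _ 1] allI impI)
      fix n :: nat assume n: "1 \<le> n"
      define r where "r = floor_sqrt n"
      have r1: "r \<ge> 1" using n unfolding r_def by (simp add: le_floor_sqrtI)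
      have rn: "r^2 \<le> n" unfolding r_def by simp
      have nr: "n < (Suc r)^2" unfolding r_def by (rule Suc_floor_sqrt_power2_gt)
      have d1: "\<bar>s n - s (r^2)\<bar> \<le> real (n - r^2)" using incr_bound[of s, OF inc rn] .
      have d2: "real (n - r^2) \<le> 2 * real r"
      proof -
        have "n \<le> r^2 + 2 * r" using nr by (simp add: power2_eq_square)
        then show ?thesis using rn by linarith
      qed
      have rpos: "real (r^2) > 0" using r1 by simp
      have nge: "real n \<ge> real (r^2)" using rn by linarith
      have "\<bar>s n\<bar> \<le> \<bar>s (r^2)\<bar> + 2 * real r" using d1 d2 by linarith
      then have "\<bar>s n\<bar> / real n \<le> (\<bar>s (r^2)\<bar> + 2 * real r) / real n"
        using n by (intro divide_right_mono) auto
      also have "\<dots> \<le> (\<bar>s (r^2)\<bar> + 2 * real r) / real (r^2)"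
        using rpos nge n by (intro divide_left_mono) (auto intro!: mult_pos_pos)
      also have "\<dots> = \<bar>s (r^2) / real (r^2)\<bar> + 2 / real r"
        using r1 by (simp add: add_divide_distrib power2_eq_square)
      finally show "norm (s n / real n) \<le> f (floor_sqrt n)"
        unfolding f_def r_def[symmetric] by simp
    qed
  qed
qed

theorem theorem3p1:
  fixes d :: nat and p :: real
  assumes "d \<ge> 1" and "0 \<le> p" and "p \<le> 1"
    and "p < (2 * real d + 1) / (4 * real d)"
  shows "AE w in merw_space d p. \<forall>i<d. (\<lambda>n. merw_S d w n i / real n) \<longlonglongrightarrow> 0"
proof -
  note d = assms(1) and p = assms(2,3) and pd = assms(4)
  have d0: "d > 0" using d by simp
  define a where "a = (2 * real d * p - 1) / (2 * real d - 1)"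
  define c where "c = max 1 (1 / (1 - 2 * a))"
  have c1: "c \<ge> 1" unfolding c_def by simp
  have EB: "(\<integral>\<^sup>+ w. ennreal (Qf d w n) \<partial>merw_space d p) \<le> ennreal (c * real n)" for n
    unfolding c_def a_def by (rule E_bound[OF d p pd])
  define g where "g k w = Qf d w ((Suc k)^2) / (real ((Suc k)^2))^2" for k w
  have gnn: "g k w \<ge> 0" for k w unfolding g_def by (simp add: Qf_nonneg)
  have gmeas: "(\<lambda>w. ennreal (g k w)) \<in> borel_measurable (merw_space d p)" for k
  proof -
    have "(\<lambda>w. Qf d w ((Suc k)^2)) \<in> borel_measurable (merw_space d p)"
      unfolding merw_space_def Qf_def by (intro borel_measurable_sum borel_measurable_power S_meas) auto
    then show ?thesis unfolding g_def
      by (intro measurable_compose[OF _ measurable_ennreal] borel_measurable_divide borel_measurable_const)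
  qed
  have Ig: "(\<integral>\<^sup>+ w. ennreal (g k w) \<partial>merw_space d p) \<le> ennreal (c * inverse (real (Suc k) ^ 2))" for k
  proof -
    define N where "N = real ((Suc k)^2)"
    have Npos: "N > 0" unfolding N_def by simp
    have "(\<integral>\<^sup>+ w. ennreal (g k w) \<partial>merw_space d p) = (\<integral>\<^sup>+ w. ennreal (1 / N^2) * ennreal (Qf d w ((Suc k)^2)) \<partial>merw_space d p)"
    proof (rule nn_integral_cong)
      fix w
      have "g k w = 1 / N^2 * Qf d w ((Suc k)^2)" unfolding g_def N_def by simp
      then show "ennreal (g k w) = ennreal (1 / N^2) * ennreal (Qf d w ((Suc k)^2))"
        using ennreal_mult''[OF Qf_nonneg[of d w "(Suc k)^2"], of "1 / N^2"] by simp
    qed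
    also have "\<dots> = ennreal (1 / N^2) * (\<integral>\<^sup>+ w. ennreal (Qf d w ((Suc k)^2)) \<partial>merw_space d p)"
    proof (rule nn_integral_cmult)
      show "(\<lambda>w. ennreal (Qf d w ((Suc k)^2))) \<in> borel_measurable (merw_space d p)"
        unfolding merw_space_def by (rule Qf_meas) auto
    qed
    also have "\<dots> \<le> ennreal (1 / N^2) * ennreal (c * N)"
      using EB[of "(Suc k)^2"] unfolding N_def by (intro mult_left_mono) auto
    also have "\<dots> = ennreal (1 / N^2 * (c * N))"
      by (rule ennreal_mult''[symmetric]) (use c1 Npos in simp)
    also have "1 / N^2 * (c * N) = c * inverse (real (Suc k) ^ 2)"
    proof -
      have "1 / N^2 * (c * N) = c / N" using Npos by (simp add: power2_eq_square)
      also have "\<dots> = c * inverse (real (Suc k) ^ 2)" unfolding N_def by (simp add: divide_inverse)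
      finally show ?thesis .
    qed
    finally show ?thesis .
  qed
  have summ: "summable (\<lambda>k. c * inverse (real (Suc k) ^ 2))"
  proof -
    have "summable (\<lambda>n. inverse (real n ^ 2))" by (rule inverse_power_summable) simp
    then have "summable (\<lambda>k. inverse (real (Suc k) ^ 2))" by (subst summable_Suc_iff)
    then show ?thesis by (rule summable_mult)
  qed
  have "(\<integral>\<^sup>+ w. (\<Sum>k. ennreal (g k w)) \<partial>merw_space d p) = (\<Sum>k. \<integral>\<^sup>+ w. ennreal (g k w) \<partial>merw_space d p)"
    by (rule nn_integral_suminf) (rule gmeas)
  also have "\<dots> \<le> (\<Sum>k. ennreal (c * inverse (real (Suc k) ^ 2)))"
    by (intro suminf_le Ig summableI)
  also have "\<dots> = ennreal (\<Sum>k. c * inverse (real (Suc k) ^ 2))"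
    using c1 summ by (intro suminf_ennreal2) auto
  finally have fin: "(\<integral>\<^sup>+ w. (\<Sum>k. ennreal (g k w)) \<partial>merw_space d p) \<noteq> \<infinity>"
    using top_neq_ennreal by (metis ennreal_less_top infinity_ennreal_def le_less_trans less_irrefl)
  have AEfin: "AE w in merw_space d p. (\<Sum>k. ennreal (g k w)) \<noteq> \<infinity>"
    by (rule nn_integral_PInf_AE[OF _ fin]) (use gmeas in measurable)
  show ?thesis
    using AEfin AE_G[of d p]
  proof eventually_elim
    case (elim w)
    have sg: "summable (\<lambda>k. g k w)"
      using elim(1) gnn by (intro summable_suminf_not_top) auto
    then have g0: "(\<lambda>k. g k w) \<longlonglongrightarrow> 0" by (rule summable_LIMSEQ_zero)
    show ?case
    proof (intro allI impI)
      fix i assume i: "i < d"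
      let ?s = "\<lambda>n. merw_S d w n i"
      show "(\<lambda>n. ?s n / real n) \<longlonglongrightarrow> 0"
      proof (rule det_lemma)
        show "?s 0 = 0" by (simp add: merw_S_def)
        show "\<bar>?s (Suc n) - ?s n\<bar> \<le> 1" for n
          using inv_G[OF d0 elim(2), of "Suc n"] by (simp add: merw_S_Suc)
        show "(\<lambda>k. ?s ((k + 1)^2) / real ((k + 1)^2)) \<longlonglongrightarrow> 0"
        proof (rule Lim_null_comparison[OF _ tendsto_real_sqrt[OF g0, simplified]])
          show "\<forall>\<^sub>F k in sequentially. norm (?s ((k + 1)^2) / real ((k + 1)^2)) \<le> sqrt (g k w)"
          proof (rule always_eventually, rule allI)
            fix k
            have "(?s ((Suc k)^2))^2 \<le> Qf d w ((Suc k)^2)"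
              unfolding Qf_def using i by (intro member_le_sum) auto
            then have "(?s ((Suc k)^2) / real ((Suc k)^2))^2 \<le> g k w"
              unfolding g_def by (simp add: power_divide divide_right_mono)
            then have "\<bar>?s ((Suc k)^2) / real ((Suc k)^2)\<bar> \<le> sqrt (g k w)"
              using real_le_rsqrt[of "\<bar>?s ((Suc k)^2) / real ((Suc k)^2)\<bar>" "g k w"] by (simp only: power2_abs)
            then show "norm (?s ((k + 1)^2) / real ((k + 1)^2)) \<le> sqrt (g k w)" by simp
          qed
        qed
      qed
    qed
  qed
qed

end
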